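(* Let $d\ge 2$ and consider the non-linear diagonal network $f_1(\mathbf{x})=s(\mathbf{w}_1\odot\mathbf{x},\mathbf{b}_1)$, $f_2(\mathbf{x})=s(\mathbf{w}_2\odot f_1(\mathbf{x}),\mathbf{b}_2)$ with trainable $\mathbf{w}_1,\mathbf{w}_2,\mathbf{b}_1,\mathbf{b}_2\in\mathbb{R}^d$, trained by gradient flow on $\mathcal{L}_{CL}(f_2)$ for pretraining data with $\phi_1=\phi_2=1$, $\sigma=0$, $\alpha_1=0$, $\alpha_2=1$ (other $\phi_i>0$, $\alpha_i\in[0,1]$ arbitrary). Write $w_{lk}^{(t)}$ for the $k$-th entry of $\mathbf{w}_l$ at time $t$. Suppose that at initialization $\mathbf{b}_1^{(0)}=\mathbf{b}_2^{(0)}=(b_0,\dots,b_0)^\top$ with $b_0>0$, $|w_{22}^{(0)}|\le\sqrt{b_0}$ and $|w_{22}^{(0)}|(|w_{12}^{(0)}|-b_0)\ge b_0$. Then as $t\to\infty$, $\|f_2^{(t)}(\mathbf{e}_2)\|\to 0$, while $\liminf_{t\to\infty}\|f_1^{(t)}(\mathbf{e}_2)\|\ge\sqrt{b_0}$.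
   Context: $s(a,b)=\mathrm{ReLU}(a-b)-\mathrm{ReLU}(-a-b)$ is the symmetrized ReLU, applied entrywise to vectors; $\odot$ is the entrywise product. Pretraining distribution: $\mathbf{x}\in\mathbb{R}^d$ with independent coordinates $x_i$ uniform on $\{-\phi_i,\phi_i\}$. Augmentation $\mathcal{A}(\mathbf{x})$: for each $i$ independently, with probability $\alpha_i$ the sign of $x_i$ is re-randomized (uniform $\pm\phi_i$), otherwise kept; then noise of covariance $\sigma^2\mathbf{I}$ is added (here $\sigma=0$, so no noise). $\mathcal{L}_{CL}(f)=-2\,\mathbb{E}_{\mathbf{x},\,\mathbf{x}_1^+,\mathbf{x}_2^+\sim\mathcal{A}(\mathbf{x})}[f(\mathbf{x}_1^+)^\top f(\mathbf{x}_2^+)]+\mathbb{E}_{\mathbf{x}_1,\mathbf{x}_2\text{ i.i.d.}}[(f(\mathcal{A}(\mathbf{x}_1))^\top f(\mathcal{A}(\mathbf{x}_2)))^2]$, with independent augmentations. Gradient flow: $\frac{d}{dt}\theta^{(t)}=-\nabla_\theta\mathcal{L}_{CL}(f_2)$ for every parameter $\theta$ (with the standard a.e. derivative of ReLU). $\mathbf{e}_2$ is the second standard basis vector. *)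

theory Defs
  imports "HOL-Probability.Probability"
begin

(* Coordinates are indexed by nat, i < d; paper index i+1 corresponds to index i here. *)

definition relu :: "real \<Rightarrow> real" where "relu z = max z 0"

definition relu' :: "real \<Rightarrow> real" where "relu' z = (if z > 0 then 1 else 0)"

definition srelu :: "real \<Rightarrow> real \<Rightarrow> real" where
  "srelu a b = relu (a - b) - relu (- a - b)"
definition srelu_da :: "real \<Rightarrow> real \<Rightarrow> real" where
  "srelu_da a b = relu' (a - b) + relu' (- a - b)"
definition srelu_db :: "real \<Rightarrow> real \<Rightarrow> real" where
  "srelu_db a b = - relu' (a - b) + relu' (- a - b)"

datatype param = W1 | B1 | W2 | B2

type_synonym params = "param \<Rightarrow> nat \<Rightarrow> real"

definition f1 :: "params \<Rightarrow> (nat \<Rightarrow> real) \<Rightarrow> nat \<Rightarrow> real" where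
  "f1 \<theta> x k = srelu (\<theta> W1 k * x k) (\<theta> B1 k)"

definition f2 :: "params \<Rightarrow> (nat \<Rightarrow> real) \<Rightarrow> nat \<Rightarrow> real" where
  "f2 \<theta> x k = srelu (\<theta> W2 k * f1 \<theta> x k) (\<theta> B2 k)"

(* derivative of f_2(x)_k w.r.t. the k-th entry of parameter p (chain rule, ReLU' = indicator);
   f_2(x)_j does not depend on the k-th entries for j \<noteq> k *)
fun df2 :: "param \<Rightarrow> params \<Rightarrow> (nat \<Rightarrow> real) \<Rightarrow> nat \<Rightarrow> real" where
  "df2 W2 \<theta> x k = srelu_da (\<theta> W2 k * f1 \<theta> x k) (\<theta> B2 k) * f1 \<theta> x k"
| "df2 B2 \<theta> x k = srelu_db (\<theta> W2 k * f1 \<theta> x k) (\<theta> B2 k)"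
| "df2 W1 \<theta> x k = srelu_da (\<theta> W2 k * f1 \<theta> x k) (\<theta> B2 k) * \<theta> W2 k
                       * srelu_da (\<theta> W1 k * x k) (\<theta> B1 k) * x k"
| "df2 B1 \<theta> x k = srelu_da (\<theta> W2 k * f1 \<theta> x k) (\<theta> B2 k) * \<theta> W2 k
                       * srelu_db (\<theta> W1 k * x k) (\<theta> B1 k)"

definition data_pmf :: "nat \<Rightarrow> (nat \<Rightarrow> real) \<Rightarrow> (nat \<Rightarrow> real) pmf" where
  "data_pmf d \<phi> = Pi_pmf {..<d} 0 (\<lambda>i. pmf_of_set {- \<phi> i, \<phi> i})"

(* augmentation with sigma = 0: with prob. alpha_i re-randomize the sign of x_i, else keep *)
definition aug_pmf :: "nat \<Rightarrow> (nat \<Rightarrow> real) \<Rightarrow> (nat \<Rightarrow> real) \<Rightarrow> (nat \<Rightarrow> real) \<Rightarrow> (nat \<Rightarrow> real) pmf" where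
  "aug_pmf d \<alpha> \<phi> x = Pi_pmf {..<d} 0 (\<lambda>i. bind_pmf (bernoulli_pmf (\<alpha> i))
        (\<lambda>c. if c then pmf_of_set {- \<phi> i, \<phi> i} else return_pmf (x i)))"

definition pos_pmf :: "nat \<Rightarrow> (nat \<Rightarrow> real) \<Rightarrow> (nat \<Rightarrow> real) \<Rightarrow> ((nat \<Rightarrow> real) \<times> (nat \<Rightarrow> real)) pmf" where
  "pos_pmf d \<alpha> \<phi> = bind_pmf (data_pmf d \<phi>) (\<lambda>x.
      bind_pmf (aug_pmf d \<alpha> \<phi> x) (\<lambda>y1. bind_pmf (aug_pmf d \<alpha> \<phi> x) (\<lambda>y2. return_pmf (y1, y2))))"

definition neg_pmf :: "nat \<Rightarrow> (nat \<Rightarrow> real) \<Rightarrow> (nat \<Rightarrow> real) \<Rightarrow> ((nat \<Rightarrow> real) \<times> (nat \<Rightarrow> real)) pmf" where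
  "neg_pmf d \<alpha> \<phi> = bind_pmf (data_pmf d \<phi>) (\<lambda>x1. bind_pmf (data_pmf d \<phi>) (\<lambda>x2.
      bind_pmf (aug_pmf d \<alpha> \<phi> x1) (\<lambda>z1. bind_pmf (aug_pmf d \<alpha> \<phi> x2) (\<lambda>z2. return_pmf (z1, z2)))))"

definition inner_d :: "nat \<Rightarrow> (nat \<Rightarrow> real) \<Rightarrow> (nat \<Rightarrow> real) \<Rightarrow> real" where
  "inner_d d u v = (\<Sum>j<d. u j * v j)"

definition norm_d :: "nat \<Rightarrow> (nat \<Rightarrow> real) \<Rightarrow> real" where
  "norm_d d u = sqrt (\<Sum>j<d. (u j)\<^sup>2)"

definition loss_CL :: "nat \<Rightarrow> (nat \<Rightarrow> real) \<Rightarrow> (nat \<Rightarrow> real) \<Rightarrow> params \<Rightarrow> real" where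
  "loss_CL d \<alpha> \<phi> \<theta> =
     - 2 * measure_pmf.expectation (pos_pmf d \<alpha> \<phi>) (\<lambda>(y1, y2). inner_d d (f2 \<theta> y1) (f2 \<theta> y2))
     + measure_pmf.expectation (neg_pmf d \<alpha> \<phi>) (\<lambda>(z1, z2). (inner_d d (f2 \<theta> z1) (f2 \<theta> z2))\<^sup>2)"

(* partial derivative of L_CL(f_2) w.r.t. the k-th entry of parameter p,
   computed by the chain rule inside the expectations with ReLU'(z) = [z > 0] *)
definition grad_CL :: "nat \<Rightarrow> (nat \<Rightarrow> real) \<Rightarrow> (nat \<Rightarrow> real) \<Rightarrow> params \<Rightarrow> param \<Rightarrow> nat \<Rightarrow> real" where
  "grad_CL d \<alpha> \<phi> \<theta> p k =
     - 2 * measure_pmf.expectation (pos_pmf d \<alpha> \<phi>)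
           (\<lambda>(y1, y2). df2 p \<theta> y1 k * f2 \<theta> y2 k + f2 \<theta> y1 k * df2 p \<theta> y2 k)
     + measure_pmf.expectation (neg_pmf d \<alpha> \<phi>)
           (\<lambda>(z1, z2). 2 * inner_d d (f2 \<theta> z1) (f2 \<theta> z2)
                        * (df2 p \<theta> z1 k * f2 \<theta> z2 k + f2 \<theta> z1 k * df2 p \<theta> z2 k))"

(* e_2 (paper indexing) = indicator of index 1 here *)
definition e2 :: "nat \<Rightarrow> real" where "e2 = (\<lambda>j. if j = 1 then 1 else 0)"

end

theory Submission
  imports Defs
begin



definition flip1 :: "(nat \<Rightarrow> real) \<Rightarrow> nat \<Rightarrow> real" where
  "flip1 z = z(1 := - z 1)"

lemma flip1_flip1[simp]: "flip1 (flip1 z) = z"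
  by (auto simp: flip1_def fun_eq_iff)

lemma inj_flip1: "inj flip1"
  by (metis flip1_flip1 injI)

lemma bernoulli_1: "bernoulli_pmf 1 = return_pmf True"
  by (rule pmf_eqI) (auto simp: indicator_def)

lemma aug_comp1:
  assumes "\<alpha> 1 = 1" "\<phi> 1 = 1"
  shows "bind_pmf (bernoulli_pmf (\<alpha> 1))
        (\<lambda>c. if c then pmf_of_set {- \<phi> 1, \<phi> 1} else return_pmf (x 1)) = pmf_of_set {-1, 1}"
  using assms by (simp add: bernoulli_1 bind_return_pmf)

lemma aug_inv:
  assumes "\<alpha> 1 = 1" "\<phi> 1 = 1" "1 < d"
  shows "map_pmf flip1 (aug_pmf d \<alpha> \<phi> x) = aug_pmf d \<alpha> \<phi> x"
proof (rule pmf_eqI)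
  fix z
  have "pmf (map_pmf flip1 (aug_pmf d \<alpha> \<phi> x)) z
      = pmf (map_pmf flip1 (aug_pmf d \<alpha> \<phi> x)) (flip1 (flip1 z))" by simp
  also have "\<dots> = pmf (aug_pmf d \<alpha> \<phi> x) (flip1 z)"
    by (rule pmf_map_inj'[OF inj_flip1])
  also have "\<dots> = pmf (aug_pmf d \<alpha> \<phi> x) z"
  proof -
    have out: "(\<forall>i. i \<notin> {..<d} \<longrightarrow> flip1 z i = 0) = (\<forall>i. i \<notin> {..<d} \<longrightarrow> z i = 0)"
      using assms(3) by (auto simp: flip1_def)
    have pr: "(\<Prod>i\<in>{..<d}. pmf (bind_pmf (bernoulli_pmf (\<alpha> i))
        (\<lambda>c. if c then pmf_of_set {- \<phi> i, \<phi> i} else return_pmf (x i))) (flip1 z i))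
      = (\<Prod>i\<in>{..<d}. pmf (bind_pmf (bernoulli_pmf (\<alpha> i))
        (\<lambda>c. if c then pmf_of_set {- \<phi> i, \<phi> i} else return_pmf (x i))) (z i))"
    proof (rule prod.cong[OF refl])
      fix i assume "i \<in> {..<d}"
      show "pmf (bind_pmf (bernoulli_pmf (\<alpha> i))
        (\<lambda>c. if c then pmf_of_set {- \<phi> i, \<phi> i} else return_pmf (x i))) (flip1 z i)
       = pmf (bind_pmf (bernoulli_pmf (\<alpha> i))
        (\<lambda>c. if c then pmf_of_set {- \<phi> i, \<phi> i} else return_pmf (x i))) (z i)"
      proof (cases "i = 1")
        case True
        then show ?thesis using assms
          by (simp add: bernoulli_1 bind_return_pmf flip1_def indicator_def)
      next
        case False
        then show ?thesis by (simp add: flip1_def)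
      qed
    qed
    show ?thesis unfolding aug_pmf_def pmf_Pi[OF finite_lessThan] out pr ..
  qed
  finally show "pmf (map_pmf flip1 (aug_pmf d \<alpha> \<phi> x)) z = pmf (aug_pmf d \<alpha> \<phi> x) z" .
qed

lemma aug_supp:
  assumes "\<alpha> 1 = 1" "\<phi> 1 = 1" "1 < d" "z \<in> set_pmf (aug_pmf d \<alpha> \<phi> x)"
  shows "z 1 = 1 \<or> z 1 = -1"
proof -
  have "z 1 \<in> set_pmf (map_pmf (\<lambda>f. f 1) (aug_pmf d \<alpha> \<phi> x))"
    using assms(4) by auto
  also have "map_pmf (\<lambda>f. f 1) (aug_pmf d \<alpha> \<phi> x) = pmf_of_set {-1, 1}"
    unfolding aug_pmf_def Pi_pmf_component[OF finite_lessThan] using assms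
    by (simp add: bernoulli_1 bind_return_pmf)
  finally show ?thesis by auto
qed

lemma finite_aug: "finite (set_pmf (aug_pmf d \<alpha> \<phi> x))"
proof -
  have "set_pmf (aug_pmf d \<alpha> \<phi> x) \<subseteq> PiE_dflt {..<d} 0 (\<lambda>i. {- \<phi> i, \<phi> i, x i})"
    unfolding aug_pmf_def
    apply (rule order_trans[OF set_Pi_pmf_subset'[OF finite_lessThan]])
    apply (auto simp: PiE_dflt_def split: if_splits)
    done
  then show ?thesis by (rule finite_subset) auto
qed

lemma finite_data: "finite (set_pmf (data_pmf d \<phi>))"
proof -
  have "set_pmf (data_pmf d \<phi>) \<subseteq> PiE_dflt {..<d} 0 (\<lambda>i. {- \<phi> i, \<phi> i})"
    unfolding data_pmf_def
    by (rule order_trans[OF set_Pi_pmf_subset'[OF finite_lessThan]]) (auto simp: PiE_dflt_def)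
  then show ?thesis by (rule finite_subset) auto
qed

lemma finite_neg: "finite (set_pmf (neg_pmf d \<alpha> \<phi>))"
  unfolding neg_pmf_def by (auto intro!: finite_UN_I finite_data finite_aug)

lemma aug_bind_flip:
  assumes "\<alpha> 1 = 1" "\<phi> 1 = 1" "1 < d"
  shows "bind_pmf (aug_pmf d \<alpha> \<phi> x) (\<lambda>y2. return_pmf (y1, flip1 y2))
     = bind_pmf (aug_pmf d \<alpha> \<phi> x) (\<lambda>y2. return_pmf (y1, y2))"
proof -
  have "bind_pmf (aug_pmf d \<alpha> \<phi> x) (\<lambda>y2. return_pmf (y1, flip1 y2))
      = bind_pmf (map_pmf flip1 (aug_pmf d \<alpha> \<phi> x)) (\<lambda>y2. return_pmf (y1, y2))"
    by (simp add: bind_map_pmf)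
  then show ?thesis by (simp add: aug_inv[of \<alpha> \<phi> d, OF assms])
qed

lemma pos_inv:
  assumes "\<alpha> 1 = 1" "\<phi> 1 = 1" "1 < d"
  shows "map_pmf (apsnd flip1) (pos_pmf d \<alpha> \<phi>) = pos_pmf d \<alpha> \<phi>"
  unfolding pos_pmf_def by (simp add: map_bind_pmf aug_bind_flip[of \<alpha> \<phi> d, OF assms])

lemma neg_inv:
  assumes "\<alpha> 1 = 1" "\<phi> 1 = 1" "1 < d"
  shows "map_pmf (apsnd flip1) (neg_pmf d \<alpha> \<phi>) = neg_pmf d \<alpha> \<phi>"
  unfolding neg_pmf_def by (simp add: map_bind_pmf aug_bind_flip[of \<alpha> \<phi> d, OF assms])

lemma exp_antisym:
  fixes h :: "'a \<Rightarrow> real"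
  assumes "map_pmf \<tau> M = M" "\<forall>x\<in>set_pmf M. h (\<tau> x) = - h x"
  shows "measure_pmf.expectation M h = 0"
proof -
  have "measure_pmf.expectation M h = measure_pmf.expectation (map_pmf \<tau> M) h"
    using assms(1) by simp
  also have "\<dots> = measure_pmf.expectation M (\<lambda>x. h (\<tau> x))" by simp
  also have "\<dots> = measure_pmf.expectation M (\<lambda>x. - h x)"
    by (rule integral_cong_AE) (use assms(2) in \<open>auto simp: AE_measure_pmf_iff\<close>)
  also have "\<dots> = - measure_pmf.expectation M h" by simp
  finally show ?thesis by simp
qed




lemma relu'_simps: "relu' z = (if z > 0 then 1 else 0)" by (simp add: relu'_def)

lemma srelu_odd: "srelu (- a) b = - srelu a b"
  by (simp add: srelu_def)
lemma srelu_da_even: "srelu_da (- a) b = srelu_da a b"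
  by (simp add: srelu_da_def)
lemma srelu_db_odd: "srelu_db (- a) b = - srelu_db a b"
  by (simp add: srelu_db_def)

lemma flip1_1: "flip1 z 1 = - z 1" unfolding flip1_def by simp

lemma f1_flip: "f1 \<theta> (flip1 z) 1 = - f1 \<theta> z 1"
  unfolding f1_def flip1_1 mult_minus_right srelu_odd ..
lemma f2_flip: "f2 \<theta> (flip1 z) 1 = - f2 \<theta> z 1"
  unfolding f2_def f1_flip mult_minus_right srelu_odd ..
lemma f2_flip_other: "j \<noteq> 1 \<Longrightarrow> f2 \<theta> (flip1 z) j = f2 \<theta> z j"
  by (simp add: f2_def f1_def flip1_def)
lemma df2_flip: "df2 p \<theta> (flip1 z) 1 = - df2 p \<theta> z 1"
  by (cases p) (simp_all only: df2.simps f1_flip flip1_1 mult_minus_right srelu_da_even srelu_db_odd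
      mult_minus_left)

lemmas f2_flip_S = f2_flip[unfolded One_nat_def]
lemmas df2_flip_S = df2_flip[unfolded One_nat_def]

lemma f2_dep: "z 1 = w 1 \<Longrightarrow> f2 \<theta> z 1 = f2 \<theta> w 1"
  by (simp add: f2_def f1_def)
lemma df2_dep: "z 1 = w 1 \<Longrightarrow> df2 p \<theta> z 1 = df2 p \<theta> w 1"
proof -
  assume "z 1 = w 1"
  moreover have "f1 \<theta> z 1 = f1 \<theta> w 1" using \<open>z 1 = w 1\<close> by (simp add: f1_def)
  ultimately show ?thesis by (cases p) simp_all
qed

lemma e2_1: "e2 1 = 1" by (simp add: e2_def)

lemma f2_sign: "z 1 = 1 \<or> z 1 = -1 \<Longrightarrow> f2 \<theta> z 1 = z 1 * f2 \<theta> e2 1"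
proof (elim disjE)
  assume a: "z 1 = 1"
  have "f2 \<theta> z 1 = f2 \<theta> e2 1" by (rule f2_dep) (simp only: a e2_1)
  then show ?thesis using a by simp
next
  assume a: "z 1 = -1"
  have "f2 \<theta> z 1 = f2 \<theta> (flip1 e2) 1" by (rule f2_dep) (simp only: a flip1_1 e2_1)
  then show ?thesis using a by (simp add: f2_flip_S)
qed

lemma df2_sign: "z 1 = 1 \<or> z 1 = -1 \<Longrightarrow> df2 p \<theta> z 1 = z 1 * df2 p \<theta> e2 1"
proof (elim disjE)
  assume a: "z 1 = 1"
  have "df2 p \<theta> z 1 = df2 p \<theta> e2 1" by (rule df2_dep) (simp only: a e2_1)
  then show ?thesis using a by simp
next
  assume a: "z 1 = -1"
  have "df2 p \<theta> z 1 = df2 p \<theta> (flip1 e2) 1" by (rule df2_dep) (simp only: a flip1_1 e2_1)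
  then show ?thesis using a by (simp add: df2_flip_S)
qed

lemma grad_formula:
  assumes "\<alpha> 1 = 1" "\<phi> 1 = 1" "1 < d"
  shows "grad_CL d \<alpha> \<phi> \<theta> p 1 = 4 * (f2 \<theta> e2 1)^3 * df2 p \<theta> e2 1"
proof -
  define F where "F = f2 \<theta> e2 1"
  define D where "D = df2 p \<theta> e2 1"
  have pos: "measure_pmf.expectation (pos_pmf d \<alpha> \<phi>)
           (\<lambda>(y1, y2). df2 p \<theta> y1 1 * f2 \<theta> y2 1 + f2 \<theta> y1 1 * df2 p \<theta> y2 1) = 0"
    by (rule exp_antisym[OF pos_inv[of \<alpha> \<phi> d, OF assms]])
       (auto simp: f2_flip_S df2_flip_S algebra_simps)
  define N where "N = (\<lambda>(z1, z2). 2 * inner_d d (f2 \<theta> z1) (f2 \<theta> z2)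
                        * (df2 p \<theta> z1 1 * f2 \<theta> z2 1 + f2 \<theta> z1 1 * df2 p \<theta> z2 1))"
  define c where "c = 4 * F^3 * D"
  have inner_split: "inner_d d u v = u 1 * v 1 + (\<Sum>j\<in>{..<d} - {1}. u j * v j)" for u v
    unfolding inner_d_def using assms(3) by (simp add: sum.remove)
  have h0: "measure_pmf.expectation (neg_pmf d \<alpha> \<phi>) (\<lambda>x. N x - c) = 0"
  proof (rule exp_antisym[OF neg_inv[of \<alpha> \<phi> d, OF assms]], safe)
    fix z1 z2 assume zz: "(z1, z2) \<in> set_pmf (neg_pmf d \<alpha> \<phi>)"
    then obtain x1 x2 where "z1 \<in> set_pmf (aug_pmf d \<alpha> \<phi> x1)" "z2 \<in> set_pmf (aug_pmf d \<alpha> \<phi> x2)"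
      unfolding neg_pmf_def by auto
    then have s1: "z1 1 = 1 \<or> z1 1 = -1" and s2: "z2 1 = 1 \<or> z2 1 = -1"
      using aug_supp[of \<alpha> \<phi> d] assms by blast+
    have s2': "flip1 z2 1 = 1 \<or> flip1 z2 1 = -1" using s2 by (auto simp: flip1_def)
    define A where "A = (\<Sum>j\<in>{..<d} - {1}. f2 \<theta> z1 j * f2 \<theta> z2 j)"
    have A': "(\<Sum>j\<in>{..<d} - {1}. f2 \<theta> z1 j * f2 \<theta> (flip1 z2) j) = A"
      unfolding A_def by (rule sum.cong) (auto simp: f2_flip_other)
    have fz2: "flip1 z2 1 = - z2 1" by (simp add: flip1_def)
    show "N (apsnd flip1 (z1, z2)) - c = - (N (z1, z2) - c)"
      unfolding N_def c_def apsnd_conv prod.case inner_split A' A_def[symmetric]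
      unfolding f2_sign[where z=z1, OF s1] f2_sign[where z=z2, OF s2] f2_sign[where z="flip1 z2", OF s2'] df2_sign[where z=z1, OF s1] df2_sign[where z=z2, OF s2]
        df2_sign[where z="flip1 z2", OF s2'] fz2 F_def[symmetric] D_def[symmetric]
      using s1 s2 by (elim disjE) (simp_all add: algebra_simps power3_eq_cube)
  qed
  have int: "integrable (measure_pmf (neg_pmf d \<alpha> \<phi>)) N"
    by (rule integrable_measure_pmf_finite[OF finite_neg])
  have "measure_pmf.expectation (neg_pmf d \<alpha> \<phi>) N
      = measure_pmf.expectation (neg_pmf d \<alpha> \<phi>) (\<lambda>x. (N x - c) + c)" by simp
  also have "\<dots> = measure_pmf.expectation (neg_pmf d \<alpha> \<phi>) (\<lambda>x. N x - c)
      + measure_pmf.expectation (neg_pmf d \<alpha> \<phi>) (\<lambda>x. c)"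
    by (rule Bochner_Integration.integral_add) (rule integrable_measure_pmf_finite[OF finite_neg])+
  also have "\<dots> = c" using h0 by simp
  finally have neg: "measure_pmf.expectation (neg_pmf d \<alpha> \<phi>) N = c" .
  show ?thesis unfolding grad_CL_def pos using neg unfolding N_def c_def F_def D_def by simp
qed




lemma srelu_pos: "b > 0 \<Longrightarrow> srelu a b = sgn a * max (\<bar>a\<bar> - b) 0"
  by (auto simp: srelu_def relu_def sgn_if max_def)
lemma srelu_da_pos: "b > 0 \<Longrightarrow> srelu_da a b = (if \<bar>a\<bar> > b then 1 else 0)"
  by (auto simp: srelu_da_def relu'_def)
lemma srelu_db_pos: "b > 0 \<Longrightarrow> srelu_db a b = (if \<bar>a\<bar> > b then - sgn a else 0)"
  by (auto simp: srelu_db_def relu'_def)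

lemma region:
  fixes u b1 v b2 :: real
  assumes "b1 > 0" "b2 > 0" "\<bar>u\<bar> > b1" "v \<noteq> 0"
  defines "g \<equiv> \<bar>u\<bar> - b1"
  defines "Ps \<equiv> max (\<bar>v\<bar> * g - b2) 0"
  defines "F \<equiv> srelu (v * srelu u b1) b2"
  shows "srelu u b1 = sgn u * g"
    and "F = sgn v * sgn u * Ps"
    and "F ^ 3 * (srelu_da (v * srelu u b1) b2 * srelu u b1) = sgn v * Ps ^ 3 * g"
    and "F ^ 3 * srelu_db (v * srelu u b1) b2 = - (Ps ^ 3)"
    and "F ^ 3 * (srelu_da (v * srelu u b1) b2 * v * srelu_da u b1) = sgn u * Ps ^ 3 * \<bar>v\<bar>"
    and "F ^ 3 * (srelu_da (v * srelu u b1) b2 * v * srelu_db u b1) = - (Ps ^ 3 * \<bar>v\<bar>)"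
proof -
  have g: "g > 0" using assms(3) by (simp add: g_def)
  show s1: "srelu u b1 = sgn u * g"
    using assms(1,3) by (simp add: srelu_pos g_def max_def)
  have su: "sgn u * sgn u = 1" "\<bar>sgn u\<bar> = 1" using assms(1,3) by (auto simp: sgn_if)
  have sv: "sgn v * sgn v = 1" "\<bar>sgn v\<bar> = 1" using assms(4) by (auto simp: sgn_if)
  have absa: "\<bar>v * srelu u b1\<bar> = \<bar>v\<bar> * g" using g su by (simp add: s1 abs_mult)
  have sgna: "sgn (v * srelu u b1) = sgn v * sgn u" using g by (simp add: s1 sgn_mult)
  show sF: "F = sgn v * sgn u * Ps"
    unfolding F_def Ps_def using assms(2) by (simp add: srelu_pos absa sgna)
  have da: "srelu_da (v * srelu u b1) b2 = (if Ps > 0 then 1 else 0)"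
    using assms(2) by (simp add: srelu_da_pos absa Ps_def)
  have db: "srelu_db (v * srelu u b1) b2 = (if Ps > 0 then - (sgn v * sgn u) else 0)"
    using assms(2) by (simp add: srelu_db_pos absa sgna Ps_def)
  have da1: "srelu_da u b1 = 1" using assms(1,3) by (simp add: srelu_da_pos)
  have db1: "srelu_db u b1 = - sgn u" using assms(1,3) by (simp add: srelu_db_pos)
  have P0: "Ps \<ge> 0" by (simp add: Ps_def)
  have vabs: "v = sgn v * \<bar>v\<bar>" by (simp add: sgn_mult_abs)
  have c3: "(sgn v * sgn u * Ps) ^ 3 = sgn v * sgn u * Ps ^ 3"
  proof -
    have "(sgn v * sgn u * Ps) ^ 3 = (sgn v * sgn v) * sgn v * ((sgn u * sgn u) * sgn u) * Ps ^ 3"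
      by (simp add: power3_eq_cube algebra_simps)
    then show ?thesis using su sv by simp
  qed
  show "F ^ 3 * (srelu_da (v * srelu u b1) b2 * srelu u b1) = sgn v * Ps ^ 3 * g"
    unfolding sF c3 da unfolding s1 using su P0
    by (cases "Ps > 0") (auto simp: algebra_simps)
  show "F ^ 3 * srelu_db (v * srelu u b1) b2 = - (Ps ^ 3)"
    unfolding sF c3 db using su sv P0
    by (cases "Ps > 0") (auto simp: algebra_simps)
  show "F ^ 3 * (srelu_da (v * srelu u b1) b2 * v * srelu_da u b1) = sgn u * Ps ^ 3 * \<bar>v\<bar>"
    unfolding sF c3 da da1 using su sv P0
    apply (cases "Ps > 0")
     apply (subst (2) vabs)
     apply (auto simp: algebra_simps)
    done
  show "F ^ 3 * (srelu_da (v * srelu u b1) b2 * v * srelu_db u b1) = - (Ps ^ 3 * \<bar>v\<bar>)"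
    unfolding sF c3 da db1 using su sv P0
    apply (cases "Ps > 0")
     apply (subst (2) vabs)
     apply (auto simp: algebra_simps)
    done
qed




lemma deriv_abs_at:
  fixes y :: real assumes "y \<noteq> 0"
  shows "((\<lambda>x. \<bar>x\<bar>) has_real_derivative sgn y) (at y)"
proof (cases "y > 0")
  case True
  have "((\<lambda>x. x) has_real_derivative 1) (at y)" by (rule DERIV_ident)
  then have "((\<lambda>x. \<bar>x\<bar>) has_real_derivative 1) (at y)"
    by (rule has_field_derivative_transform_within_open[where S="{0<..}"]) (use True in auto)
  then show ?thesis using True by simp
next
  case False
  then have y: "y < 0" using assms by simp
  have "((\<lambda>x. - x) has_real_derivative -1) (at y)" by (auto intro!: derivative_eq_intros)
  then have "((\<lambda>x. \<bar>x\<bar>) has_real_derivative -1) (at y)"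
    by (rule has_field_derivative_transform_within_open[where S="{..<0}"]) (use y in auto)
  then show ?thesis using y by simp
qed

lemma deriv_abs:
  fixes f :: "real \<Rightarrow> real"
  assumes "(f has_real_derivative D) (at t)" "f t \<noteq> 0"
  shows "((\<lambda>s. \<bar>f s\<bar>) has_real_derivative sgn (f t) * D) (at t)"
  using DERIV_chain2[OF deriv_abs_at[OF assms(2)] assms(1)] by simp

lemma barrier:
  fixes f f' :: "real \<Rightarrow> real" and a b :: real
  assumes ab: "a \<le> b" and cont: "continuous_on {a..b} f"
    and der: "\<And>x. a < x \<Longrightarrow> x < b \<Longrightarrow> (f has_real_derivative f' x) (at x)"
    and zero: "\<And>x. a < x \<Longrightarrow> x < b \<Longrightarrow> f x < 0 \<Longrightarrow> f' x = 0"
    and fa: "f a \<ge> 0"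
  shows "f b \<ge> 0"
proof (rule ccontr)
  assume nb: "\<not> f b \<ge> 0"
  define S where "S = {x \<in> {a..b}. (\<lambda>x. 0) x \<le> f x}"
  have cl: "closed S" unfolding S_def
    by (rule continuous_on_closed_Collect_le) (auto intro: cont continuous_on_const)
  have ne: "S \<noteq> {}" using ab fa by (auto simp: S_def)
  have bdd: "bdd_above S" by (auto simp: S_def bdd_above_def)
  define s where "s = Sup S"
  have sS: "s \<in> S" unfolding s_def by (rule closed_contains_Sup[OF ne bdd cl])
  then have s1: "a \<le> s" "s \<le> b" "f s \<ge> 0" by (auto simp: S_def)
  have sb: "s < b" using s1 nb by (cases "s = b") auto
  have neg: "f x < 0" if "s < x" "x \<le> b" for x
  proof (rule ccontr)
    assume "\<not> f x < 0"
    then have "x \<in> S" using that s1 by (auto simp: S_def)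
    then have "x \<le> s" unfolding s_def by (rule cSup_upper[OF _ bdd])
    then show False using that by simp
  qed
  have cont': "continuous_on {s..b} f" by (rule continuous_on_subset[OF cont]) (use s1 in auto)
  obtain l z where z: "s < z" "z < b" "(f has_real_derivative l) (at z)" "f b - f s = (b - s) * l"
    using MVT[OF sb cont'] der s1 by (metis DERIV_unique order.strict_trans1 order.strict_trans2 real_differentiable_def)
  have "f' z = 0" using zero[of z] neg[of z] z s1 by auto
  moreover have "l = f' z" using DERIV_unique[OF z(3) der[of z]] z s1 by auto
  ultimately have "f b = f s" using z by simp
  then show False using nb s1 by simp
qed




lemma ode_analysis:
  fixes U P V Q :: "real \<Rightarrow> real" and b0 :: real
  defines "g \<equiv> \<lambda>t. \<bar>U t\<bar> - P t"
  defines "Ps \<equiv> \<lambda>t. max (\<bar>V t\<bar> * g t - Q t) 0"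
  defines "R \<equiv> \<lambda>t. P t > 0 \<and> Q t > 0 \<and> \<bar>U t\<bar> > P t \<and> V t \<noteq> 0"
  assumes b0: "b0 > 0"
    and cU: "continuous_on {0..} U" and cP: "continuous_on {0..} P"
    and cV: "continuous_on {0..} V" and cQ: "continuous_on {0..} Q"
    and dU: "\<And>t. t > 0 \<Longrightarrow> R t \<Longrightarrow> (U has_real_derivative (- 4 * sgn (U t) * Ps t ^ 3 * \<bar>V t\<bar>)) (at t)"
    and dP: "\<And>t. t > 0 \<Longrightarrow> R t \<Longrightarrow> (P has_real_derivative (4 * Ps t ^ 3 * \<bar>V t\<bar>)) (at t)"
    and dV: "\<And>t. t > 0 \<Longrightarrow> R t \<Longrightarrow> (V has_real_derivative (- 4 * sgn (V t) * Ps t ^ 3 * g t)) (at t)"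
    and dQ: "\<And>t. t > 0 \<Longrightarrow> R t \<Longrightarrow> (Q has_real_derivative (4 * Ps t ^ 3)) (at t)"
    and i1: "P 0 = b0" and i2: "Q 0 = b0" and i3: "\<bar>V 0\<bar> \<le> sqrt b0"
    and i4: "\<bar>V 0\<bar> * (\<bar>U 0\<bar> - b0) \<ge> b0"
  shows "\<forall>t\<ge>0. R t \<and> g t \<ge> sqrt b0" and "(Ps \<longlongrightarrow> 0) at_top"
proof -
  define \<Phi> where "\<Phi> = (\<lambda>t. \<bar>V t\<bar> * g t - Q t)"
  define Inv where "Inv = (\<lambda>t. P t \<ge> b0 \<and> Q t \<ge> b0 \<and> \<bar>V t\<bar> \<le> sqrt b0 \<and> \<Phi> t \<ge> 0)"
  have sb: "sqrt b0 > 0" using b0 by simp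
  have sbsq: "sqrt b0 * sqrt b0 = b0" using b0 by simp
  have InvR: "R t \<and> g t \<ge> sqrt b0 \<and> Ps t = \<Phi> t" if "Inv t" for t
  proof -
    have h: "P t \<ge> b0" "Q t \<ge> b0" "\<bar>V t\<bar> \<le> sqrt b0" "\<bar>V t\<bar> * g t \<ge> Q t"
      using that by (auto simp: Inv_def \<Phi>_def)
    have pr: "\<bar>V t\<bar> * g t \<ge> b0" using h by simp
    have vpos: "\<bar>V t\<bar> > 0"
    proof (rule ccontr)
      assume "\<not> \<bar>V t\<bar> > 0" then have "\<bar>V t\<bar> = 0" by simp
      then show False using pr b0 by simp
    qed
    have gpos: "g t > 0"
    proof (rule ccontr)
      assume "\<not> g t > 0"
      then have "\<bar>V t\<bar> * g t \<le> 0" using vpos by (simp add: mult_nonneg_nonpos)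
      then show False using pr b0 by simp
    qed
    have gge: "g t \<ge> sqrt b0"
    proof (rule ccontr)
      assume "\<not> g t \<ge> sqrt b0"
      then have "sqrt b0 * g t < sqrt b0 * sqrt b0"
        using sb by (intro mult_strict_left_mono) auto
      moreover have "\<bar>V t\<bar> * g t \<le> sqrt b0 * g t"
        using h gpos by (intro mult_right_mono) auto
      ultimately have "\<bar>V t\<bar> * g t < b0" using sbsq by simp
      then show False using pr by simp
    qed
    show ?thesis using h vpos gpos gge b0
      by (auto simp: R_def Ps_def \<Phi>_def g_def max_def)
  qed
  have Inv0: "Inv 0"
    using i1 i2 i3 i4 by (simp add: Inv_def \<Phi>_def g_def)
  have cg: "continuous_on {0..} g" unfolding g_def
    by (intro continuous_intros cU cP)
  have c\<Phi>: "continuous_on {0..} \<Phi>" unfolding \<Phi>_def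
    by (intro continuous_intros cV cQ cg)
  have cAV: "continuous_on {0..} (\<lambda>t. \<bar>V t\<bar>)" by (intro continuous_intros cV)
  have dAV: "((\<lambda>s. \<bar>V s\<bar>) has_real_derivative - 4 * Ps t ^ 3 * g t) (at t)"
    if "t > 0" "R t" for t
  proof -
    have "V t \<noteq> 0" using that by (simp add: R_def)
    then have ss: "sgn (V t) * sgn (V t) = 1" by (simp add: sgn_if)
    show ?thesis
      using deriv_abs[OF dV[OF that] \<open>V t \<noteq> 0\<close>] ss
      by (rule_tac DERIV_cong) (auto simp: algebra_simps)
  qed
  have dAU: "((\<lambda>s. \<bar>U s\<bar>) has_real_derivative - 4 * Ps t ^ 3 * \<bar>V t\<bar>) (at t)"
    if "t > 0" "R t" for t
  proof -
    have "U t \<noteq> 0" using that by (auto simp: R_def)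
    then have ss: "sgn (U t) * sgn (U t) = 1" by (simp add: sgn_if)
    show ?thesis
      using deriv_abs[OF dU[OF that] \<open>U t \<noteq> 0\<close>] ss
      by (rule_tac DERIV_cong) (auto simp: algebra_simps)
  qed
  have dg: "(g has_real_derivative - 8 * Ps t ^ 3 * \<bar>V t\<bar>) (at t)" if "t > 0" "R t" for t
  proof -
    have "((\<lambda>s. \<bar>U s\<bar> - P s) has_real_derivative
           (- 4 * Ps t ^ 3 * \<bar>V t\<bar>) - (4 * Ps t ^ 3 * \<bar>V t\<bar>)) (at t)"
      by (rule DERIV_diff[OF dAU[OF that] dP[OF that]])
    then show ?thesis unfolding g_def by (rule DERIV_cong) simp
  qed
  have d\<Phi>: "(\<Phi> has_real_derivative - 4 * Ps t ^ 3 * (g t ^ 2 + 2 * \<bar>V t\<bar> ^ 2 + 1)) (at t)"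
    if "t > 0" "R t" for t
  proof -
    have "((\<lambda>s. \<bar>V s\<bar> * g s - Q s) has_real_derivative
         ((- 4 * Ps t ^ 3 * g t) * g t + (- 8 * Ps t ^ 3 * \<bar>V t\<bar>) * \<bar>V t\<bar>) - 4 * Ps t ^ 3) (at t)"
      by (rule DERIV_diff[OF DERIV_mult[OF dAV[OF that] dg[OF that]] dQ[OF that]])
    then show ?thesis unfolding \<Phi>_def
      by (rule DERIV_cong) (simp add: algebra_simps power2_eq_square)
  qed
  have Psnn: "Ps t \<ge> 0" for t by (simp add: Ps_def)
  have Ps\<Phi>: "\<Phi> t < 0 \<Longrightarrow> Ps t = 0" for t by (simp add: Ps_def \<Phi>_def)
  have KS: "Inv t" if c: "\<forall>s. 0 \<le> s \<and> s < c \<longrightarrow> R s" and t: "0 \<le> t" "t < c" for c t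
  proof (cases "t = 0")
    case True then show ?thesis using Inv0 by simp
  next
    case False
    then have tp: "t > 0" using t by simp
    have Rx: "R x" if "0 < x" "x < t" for x using c that t by auto
    have sub: "{0..t} \<subseteq> {0..}" by auto
    have "P 0 \<le> P t"
    proof (rule DERIV_nonneg_imp_increasing_open[of 0 t])
      fix x assume "0 < x" "x < t"
      then show "\<exists>y. (P has_real_derivative y) (at x) \<and> y \<ge> 0"
        using dP[of x] Rx[of x] Psnn[of x] by (intro exI[of _ "4 * Ps x ^ 3 * \<bar>V x\<bar>"]) auto
    qed (use tp continuous_on_subset[OF cP sub] in auto)
    moreover have "Q 0 \<le> Q t"
    proof (rule DERIV_nonneg_imp_increasing_open[of 0 t])
      fix x assume "0 < x" "x < t"
      then show "\<exists>y. (Q has_real_derivative y) (at x) \<and> y \<ge> 0"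
        using dQ[of x] Rx[of x] Psnn[of x] by (intro exI[of _ "4 * Ps x ^ 3"]) auto
    qed (use tp continuous_on_subset[OF cQ sub] in auto)
    moreover have "\<bar>V 0\<bar> \<ge> \<bar>V t\<bar>"
    proof (rule DERIV_nonpos_imp_decreasing_open[of 0 t])
      fix x assume x: "0 < x" "x < t"
      have "g x > 0" using Rx[OF x] by (simp add: R_def g_def)
      then show "\<exists>y. ((\<lambda>s. \<bar>V s\<bar>) has_real_derivative y) (at x) \<and> y \<le> 0"
        using dAV[of x] Rx[OF x] Psnn[of x] x
        by (intro exI[of _ "- 4 * Ps x ^ 3 * g x"]) (auto simp: mult_nonneg_nonneg)
    qed (use tp continuous_on_subset[OF cAV sub] in auto)
    moreover have "\<Phi> t \<ge> 0"
    proof (rule barrier[of 0 t \<Phi> "\<lambda>x. - 4 * Ps x ^ 3 * (g x ^ 2 + 2 * \<bar>V x\<bar> ^ 2 + 1)"])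
      show "continuous_on {0..t} \<Phi>" by (rule continuous_on_subset[OF c\<Phi> sub])
      show "\<And>x. 0 < x \<Longrightarrow> x < t \<Longrightarrow>
         (\<Phi> has_real_derivative - 4 * Ps x ^ 3 * (g x ^ 2 + 2 * \<bar>V x\<bar> ^ 2 + 1)) (at x)"
        using d\<Phi> Rx by auto
      show "\<And>x. 0 < x \<Longrightarrow> x < t \<Longrightarrow> \<Phi> x < 0 \<Longrightarrow>
         - 4 * Ps x ^ 3 * (g x ^ 2 + 2 * \<bar>V x\<bar> ^ 2 + 1) = 0"
        using Ps\<Phi> by simp
      show "\<Phi> 0 \<ge> 0" using Inv0 by (simp add: Inv_def)
    qed (use tp in auto)
    ultimately show ?thesis using i1 i2 i3 by (auto simp: Inv_def)
  qed
  have GR: "\<forall>t\<ge>0. R t"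
  proof (rule ccontr)
    assume "\<not> (\<forall>t\<ge>0. R t)"
    define X where "X = {t. 0 \<le> t \<and> \<not> R t}"
    have Xne: "X \<noteq> {}" using \<open>\<not> (\<forall>t\<ge>0. R t)\<close> by (auto simp: X_def)
    have bddX: "bdd_below X" by (auto simp: X_def bdd_below_def)
    define T where "T = Inf X"
    have T0: "T \<ge> 0" unfolding T_def by (rule cInf_greatest[OF Xne]) (auto simp: X_def)
    have below: "\<forall>s. 0 \<le> s \<and> s < T \<longrightarrow> R s"
    proof (intro allI impI)
      fix s assume s: "0 \<le> s \<and> s < T"
      show "R s"
      proof (rule ccontr)
        assume "\<not> R s" then have "s \<in> X" using s by (auto simp: X_def)
        then have "T \<le> s" unfolding T_def by (rule cInf_lower[OF _ bddX])
        then show False using s by simp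
      qed
    qed
    have InvT: "Inv T"
    proof (cases "T = 0")
      case True then show ?thesis using Inv0 by simp
    next
      case False
      then have Tp: "T > 0" using T0 by simp
      define k where "k = (\<lambda>t. min (min (P t - b0) (Q t - b0)) (min (sqrt b0 - \<bar>V t\<bar>) (\<Phi> t)))"
      have ck: "continuous_on {0..} k" unfolding k_def
        by (intro continuous_intros cP cQ cV c\<Phi>)
      have cl: "closure {0..<T} = {0..T}" using Tp by simp
      have A1: "continuous_on (closure {0..<T}) k" unfolding cl
        by (rule continuous_on_subset[OF ck]) auto
      have A2: "T \<in> closure {0..<T}" unfolding cl using Tp by simp
      have A3: "0 \<le> k x" if "x \<in> {0..<T}" for x
      proof -
        have "Inv x" using KS[OF below] that by auto
        then show "0 \<le> k x" by (simp add: k_def Inv_def)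
      qed
      have "k T \<ge> 0" by (rule continuous_ge_on_closure[OF A1 A2 A3])
      then show ?thesis by (simp add: k_def Inv_def)
    qed
    have RT: "R T" using InvR[OF InvT] by simp
    define m where "m = (\<lambda>t. min (min (P t) (Q t)) (min \<bar>V t\<bar> (\<bar>U t\<bar> - P t)))"
    have cm: "continuous_on {0..} m" unfolding m_def
      by (intro continuous_intros cP cQ cV cU)
    have mT: "m T > 0" using RT by (auto simp: m_def R_def)
    obtain \<delta> where \<delta>: "\<delta> > 0" "\<forall>x\<in>{0..}. dist x T < \<delta> \<longrightarrow> dist (m x) (m T) < m T"
      using cm T0 mT unfolding continuous_on_iff by (meson atLeast_iff)
    have "T + \<delta> \<le> Inf X"
    proof (rule cInf_greatest[OF Xne])
      fix x assume x: "x \<in> X"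
      show "T + \<delta> \<le> x"
      proof (rule ccontr)
        assume "\<not> T + \<delta> \<le> x"
        then have "x < T + \<delta>" by simp
        show False
        proof (cases "x < T")
          case True then show ?thesis using below x by (auto simp: X_def)
        next
          case False
          then have "dist x T < \<delta>" using \<open>x < T + \<delta>\<close> by (simp add: dist_real_def)
          then have "dist (m x) (m T) < m T" using \<delta> x by (auto simp: X_def)
          then have "m x > 0" by (simp add: dist_real_def)
          then have "R x" by (auto simp: m_def R_def)
          then show False using x by (simp add: X_def)
        qed
      qed
    qed
    then show False using \<delta> by (simp add: T_def)
  qed
  have InvAll: "Inv t" if "t \<ge> 0" for t
    using KS[of "t + 1" t] GR that by auto
  show "\<forall>t\<ge>0. R t \<and> g t \<ge> sqrt b0" using InvR InvAll by blast
  have \<Phi>dec: "\<Phi> y \<le> \<Phi> x" if "0 \<le> x" "x \<le> y" for x y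
  proof (rule DERIV_nonpos_imp_decreasing_open[of x y])
    fix z assume z: "x < z" "z < y"
    then have "z > 0" "R z" using that GR by auto
    then show "\<exists>l. (\<Phi> has_real_derivative l) (at z) \<and> l \<le> 0"
      using d\<Phi>[of z] Psnn[of z]
      by (intro exI[of _ "- 4 * Ps z ^ 3 * (g z ^ 2 + 2 * \<bar>V z\<bar> ^ 2 + 1)"]) auto
  qed (use that continuous_on_subset[OF c\<Phi>, of "{x..y}"] in auto)
  have Ps_eq: "Ps t = \<Phi> t" "\<Phi> t \<ge> 0" if "t \<ge> 0" for t
    using InvR[OF InvAll[OF that]] InvAll[OF that] by (auto simp: Inv_def)
  show "(Ps \<longlongrightarrow> 0) at_top"
  proof (rule order_tendstoI)
    fix a :: real assume "a < 0"
    then show "eventually (\<lambda>t. a < Ps t) at_top" using Psnn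
      by (intro always_eventually) (auto intro: less_le_trans)
  next
    fix \<epsilon> :: real assume ep: "\<epsilon> > 0"
    define T0 where "T0 = \<Phi> 0 / (4 * \<epsilon> ^ 3) + 1"
    have e3: "\<epsilon> ^ 3 > 0" using ep by simp
    have \<Phi>0: "\<Phi> 0 \<ge> 0" using Ps_eq[of 0] by simp
    have T0p: "T0 > 0" unfolding T0_def using \<Phi>0 e3 by (simp add: add_nonneg_pos)
    have small: "\<Phi> T0 < \<epsilon>"
    proof (rule ccontr)
      assume "\<not> \<Phi> T0 < \<epsilon>"
      then have big: "\<Phi> T0 \<ge> \<epsilon>" by simp
      have cont': "continuous_on {0..T0} \<Phi>" by (rule continuous_on_subset[OF c\<Phi>]) auto
      obtain l z where z: "0 < z" "z < T0" "(\<Phi> has_real_derivative l) (at z)"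
        "\<Phi> T0 - \<Phi> 0 = (T0 - 0) * l"
        using MVT[OF T0p cont'] d\<Phi> GR by (meson DERIV_unique less_eq_real_def real_differentiable_def)
      have l: "l = - 4 * Ps z ^ 3 * (g z ^ 2 + 2 * \<bar>V z\<bar> ^ 2 + 1)"
        using DERIV_unique[OF z(3) d\<Phi>[of z]] z GR by auto
      have "Ps z \<ge> \<epsilon>" using Ps_eq[of z] \<Phi>dec[of z T0] z big by auto
      then have p3: "Ps z ^ 3 \<ge> \<epsilon> ^ 3" using ep by (intro power_mono) auto
      have K: "g z ^ 2 + 2 * \<bar>V z\<bar> ^ 2 + 1 \<ge> 1" by simp
      have "Ps z ^ 3 * (g z ^ 2 + 2 * \<bar>V z\<bar> ^ 2 + 1) \<ge> \<epsilon> ^ 3 * 1"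
        using p3 K e3 Psnn[of z] by (intro mult_mono) auto
      then have "l \<le> - 4 * \<epsilon> ^ 3" using l by simp
      then have "T0 * l \<le> T0 * (- 4 * \<epsilon> ^ 3)" using T0p by (intro mult_left_mono) auto
      also have "T0 * (- 4 * \<epsilon> ^ 3) = - \<Phi> 0 - 4 * \<epsilon> ^ 3"
        unfolding T0_def using e3 by (simp add: field_simps)
      finally have "\<Phi> T0 \<le> - 4 * \<epsilon> ^ 3" using z by simp
      then show False using big ep e3 by simp
    qed
    show "eventually (\<lambda>t. Ps t < \<epsilon>) at_top"
      unfolding eventually_at_top_linorder
    proof (intro exI allI impI)
      fix t assume "t \<ge> T0"
      then show "Ps t < \<epsilon>" using Ps_eq[of t] \<Phi>dec[of T0 t] T0p small by auto
    qed
  qed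
qed




lemma region_theta:
  fixes \<theta> :: params
  assumes "\<theta> B1 1 > 0" "\<theta> B2 1 > 0" "\<bar>\<theta> W1 1\<bar> > \<theta> B1 1" "\<theta> W2 1 \<noteq> 0"
  defines "g \<equiv> \<bar>\<theta> W1 1\<bar> - \<theta> B1 1"
  defines "Ps \<equiv> max (\<bar>\<theta> W2 1\<bar> * g - \<theta> B2 1) 0"
  shows "- (4 * (f2 \<theta> e2 1) ^ 3 * df2 W1 \<theta> e2 1) = - 4 * sgn (\<theta> W1 1) * Ps ^ 3 * \<bar>\<theta> W2 1\<bar>"
    and "- (4 * (f2 \<theta> e2 1) ^ 3 * df2 B1 \<theta> e2 1) = 4 * Ps ^ 3 * \<bar>\<theta> W2 1\<bar>"
    and "- (4 * (f2 \<theta> e2 1) ^ 3 * df2 W2 \<theta> e2 1) = - 4 * sgn (\<theta> W2 1) * Ps ^ 3 * g"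
    and "- (4 * (f2 \<theta> e2 1) ^ 3 * df2 B2 \<theta> e2 1) = 4 * Ps ^ 3"
    and "\<bar>f2 \<theta> e2 1\<bar> = Ps"
    and "\<bar>f1 \<theta> e2 1\<bar> = g"
proof -
  note r = region[of "\<theta> B1 1" "\<theta> B2 1" "\<theta> W1 1" "\<theta> W2 1", OF assms(1-4),
      folded g_def, folded Ps_def]
  have f1e: "f1 \<theta> e2 1 = srelu (\<theta> W1 1) (\<theta> B1 1)" by (simp add: f1_def e2_def)
  have F: "f2 \<theta> e2 1 = srelu (\<theta> W2 1 * srelu (\<theta> W1 1) (\<theta> B1 1)) (\<theta> B2 1)"
    by (simp add: f2_def f1_def e2_def)
  have DW1: "df2 W1 \<theta> e2 1 = srelu_da (\<theta> W2 1 * srelu (\<theta> W1 1) (\<theta> B1 1)) (\<theta> B2 1) * \<theta> W2 1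
      * srelu_da (\<theta> W1 1) (\<theta> B1 1)"
    by (simp add: f1_def e2_def)
  have DB1: "df2 B1 \<theta> e2 1 = srelu_da (\<theta> W2 1 * srelu (\<theta> W1 1) (\<theta> B1 1)) (\<theta> B2 1) * \<theta> W2 1
      * srelu_db (\<theta> W1 1) (\<theta> B1 1)"
    by (simp add: f1_def e2_def)
  have DW2: "df2 W2 \<theta> e2 1 = srelu_da (\<theta> W2 1 * srelu (\<theta> W1 1) (\<theta> B1 1)) (\<theta> B2 1)
      * srelu (\<theta> W1 1) (\<theta> B1 1)"
    by (simp add: f1_def e2_def)
  have DB2: "df2 B2 \<theta> e2 1 = srelu_db (\<theta> W2 1 * srelu (\<theta> W1 1) (\<theta> B1 1)) (\<theta> B2 1)"
    by (simp add: f1_def e2_def)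
  have m: "- (4 * a ^ 3 * b) = - 4 * (a ^ 3 * b)" for a b :: real by simp
  show "- (4 * (f2 \<theta> e2 1) ^ 3 * df2 W1 \<theta> e2 1) = - 4 * sgn (\<theta> W1 1) * Ps ^ 3 * \<bar>\<theta> W2 1\<bar>"
    unfolding m F DW1 r(5) by simp
  show "- (4 * (f2 \<theta> e2 1) ^ 3 * df2 B1 \<theta> e2 1) = 4 * Ps ^ 3 * \<bar>\<theta> W2 1\<bar>"
    unfolding m F DB1 r(6) by simp
  show "- (4 * (f2 \<theta> e2 1) ^ 3 * df2 W2 \<theta> e2 1) = - 4 * sgn (\<theta> W2 1) * Ps ^ 3 * g"
    unfolding m F DW2 r(3) by simp
  show "- (4 * (f2 \<theta> e2 1) ^ 3 * df2 B2 \<theta> e2 1) = 4 * Ps ^ 3"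
    unfolding m F DB2 r(4) by simp
  have g0: "g > 0" using assms(3) by (simp add: g_def)
  have P0: "Ps \<ge> 0" by (simp add: Ps_def)
  show "\<bar>f2 \<theta> e2 1\<bar> = Ps"
  proof -
    have "\<theta> W1 1 \<noteq> 0" using assms(1,3) by auto
    then show ?thesis unfolding F r(2) using assms(4) P0 by (simp add: abs_mult abs_sgn_eq)
  qed
  show "\<bar>f1 \<theta> e2 1\<bar> = g"
    unfolding f1e r(1) using assms(1,3) g0 by (simp add: abs_mult abs_sgn_eq)
qed




lemma norm_d_single:
  assumes "1 < d" "\<And>j. j \<noteq> 1 \<Longrightarrow> h j = 0"
  shows "norm_d d h = \<bar>h 1\<bar>"
proof -
  have "(\<Sum>j<d. (h j)\<^sup>2) = (h 1)\<^sup>2 + (\<Sum>j\<in>{..<d} - {1}. (h j)\<^sup>2)"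
    using assms(1) by (simp add: sum.remove)
  also have "(\<Sum>j\<in>{..<d} - {1}. (h j)\<^sup>2) = 0"
    using assms(2) by (intro sum.neutral) auto
  finally show ?thesis unfolding norm_d_def by simp
qed

lemma f1_e2_other: "j \<noteq> 1 \<Longrightarrow> f1 \<theta> e2 j = 0"
  by (simp add: f1_def e2_def srelu_def)
lemma f2_e2_other: "j \<noteq> 1 \<Longrightarrow> f2 \<theta> e2 j = 0"
  by (simp add: f2_def f1_e2_other srelu_def)

theorem theorem3p8:
  fixes d :: nat and \<alpha> \<phi> :: "nat \<Rightarrow> real" and b0 :: real
    and \<theta> :: "real \<Rightarrow> params"
  assumes d2: "d \<ge> 2"
    and phi_pos: "\<forall>i<d. \<phi> i > 0"
    and phi12: "\<phi> 0 = 1" "\<phi> 1 = 1"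
    and alpha_range: "\<forall>i<d. 0 \<le> \<alpha> i \<and> \<alpha> i \<le> 1"
    and alpha12: "\<alpha> 0 = 0" "\<alpha> 1 = 1"
    and flow: "\<forall>p. \<forall>k<d. \<forall>t\<ge>0.
       ((\<lambda>s. \<theta> s p k) has_real_derivative (- grad_CL d \<alpha> \<phi> (\<theta> t) p k)) (at t within {0..})"
    and b0_pos: "b0 > 0"
    and init_b: "\<forall>k<d. \<theta> 0 B1 k = b0 \<and> \<theta> 0 B2 k = b0"
    and init_w22: "\<bar>\<theta> 0 W2 1\<bar> \<le> sqrt b0"
    and init_w12: "\<bar>\<theta> 0 W2 1\<bar> * (\<bar>\<theta> 0 W1 1\<bar> - b0) \<ge> b0"
  shows "((\<lambda>t. norm_d d (f2 (\<theta> t) e2)) \<longlongrightarrow> 0) at_top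
         \<and> Liminf at_top (\<lambda>t. ereal (norm_d d (f1 (\<theta> t) e2))) \<ge> ereal (sqrt b0)"

proof -
  have d1: "1 < d" using d2 by simp
  define U where "U = (\<lambda>t. \<theta> t W1 1)"
  define P where "P = (\<lambda>t. \<theta> t B1 1)"
  define V where "V = (\<lambda>t. \<theta> t W2 1)"
  define Q where "Q = (\<lambda>t. \<theta> t B2 1)"
  have cont: "continuous_on {0..} (\<lambda>s. \<theta> s p 1)" for p
    by (rule DERIV_continuous_on[where D="\<lambda>t. - grad_CL d \<alpha> \<phi> (\<theta> t) p 1"])
       (use flow d1 in auto)
  have der: "((\<lambda>s. \<theta> s p 1) has_real_derivative - (4 * (f2 (\<theta> t) e2 1) ^ 3 * df2 p (\<theta> t) e2 1)) (at t)"
    if "t > 0" for p t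
  proof -
    have "((\<lambda>s. \<theta> s p 1) has_real_derivative - grad_CL d \<alpha> \<phi> (\<theta> t) p 1) (at t within {0..})"
      using flow d1 that by auto
    then have "((\<lambda>s. \<theta> s p 1) has_real_derivative - grad_CL d \<alpha> \<phi> (\<theta> t) p 1) (at t within {0<..})"
      by (rule has_field_derivative_subset) auto
    then have "((\<lambda>s. \<theta> s p 1) has_real_derivative - grad_CL d \<alpha> \<phi> (\<theta> t) p 1) (at t)"
      using at_within_open[of t "{0<..}"] that by simp
    moreover have "grad_CL d \<alpha> \<phi> (\<theta> t) p 1 = 4 * (f2 (\<theta> t) e2 1) ^ 3 * df2 p (\<theta> t) e2 1"
      by (rule grad_formula) (use alpha12 phi12 d1 in auto)
    ultimately show ?thesis by simp
  qed
  have cU: "continuous_on {0..} U" unfolding U_def by (rule cont)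
  have cP: "continuous_on {0..} P" unfolding P_def by (rule cont)
  have cV: "continuous_on {0..} V" unfolding V_def by (rule cont)
  have cQ: "continuous_on {0..} Q" unfolding Q_def by (rule cont)
  have dU: "(U has_real_derivative (- 4 * sgn (U t) * (max (\<bar>V t\<bar> * (\<bar>U t\<bar> - P t) - Q t) 0) ^ 3 * \<bar>V t\<bar>)) (at t)"
    if t: "t > 0" and r: "P t > 0 \<and> Q t > 0 \<and> \<bar>U t\<bar> > P t \<and> V t \<noteq> 0" for t
  proof -
    have r': "\<theta> t B1 1 > 0" "\<theta> t B2 1 > 0" "\<bar>\<theta> t W1 1\<bar> > \<theta> t B1 1" "\<theta> t W2 1 \<noteq> 0"
      using r by (auto simp: U_def P_def V_def Q_def)
    show ?thesis using der[OF t, of W1] unfolding region_theta(1)[of "\<theta> t", OF r'] U_def P_def V_def Q_def .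
  qed
  have dP: "(P has_real_derivative (4 * (max (\<bar>V t\<bar> * (\<bar>U t\<bar> - P t) - Q t) 0) ^ 3 * \<bar>V t\<bar>)) (at t)"
    if t: "t > 0" and r: "P t > 0 \<and> Q t > 0 \<and> \<bar>U t\<bar> > P t \<and> V t \<noteq> 0" for t
  proof -
    have r': "\<theta> t B1 1 > 0" "\<theta> t B2 1 > 0" "\<bar>\<theta> t W1 1\<bar> > \<theta> t B1 1" "\<theta> t W2 1 \<noteq> 0"
      using r by (auto simp: U_def P_def V_def Q_def)
    show ?thesis using der[OF t, of B1] unfolding region_theta(2)[of "\<theta> t", OF r'] U_def P_def V_def Q_def .
  qed
  have dV: "(V has_real_derivative (- 4 * sgn (V t) * (max (\<bar>V t\<bar> * (\<bar>U t\<bar> - P t) - Q t) 0) ^ 3 * (\<bar>U t\<bar> - P t))) (at t)"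
    if t: "t > 0" and r: "P t > 0 \<and> Q t > 0 \<and> \<bar>U t\<bar> > P t \<and> V t \<noteq> 0" for t
  proof -
    have r': "\<theta> t B1 1 > 0" "\<theta> t B2 1 > 0" "\<bar>\<theta> t W1 1\<bar> > \<theta> t B1 1" "\<theta> t W2 1 \<noteq> 0"
      using r by (auto simp: U_def P_def V_def Q_def)
    show ?thesis using der[OF t, of W2] unfolding region_theta(3)[of "\<theta> t", OF r'] U_def P_def V_def Q_def .
  qed
  have dQ: "(Q has_real_derivative (4 * (max (\<bar>V t\<bar> * (\<bar>U t\<bar> - P t) - Q t) 0) ^ 3)) (at t)"
    if t: "t > 0" and r: "P t > 0 \<and> Q t > 0 \<and> \<bar>U t\<bar> > P t \<and> V t \<noteq> 0" for t
  proof -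
    have r': "\<theta> t B1 1 > 0" "\<theta> t B2 1 > 0" "\<bar>\<theta> t W1 1\<bar> > \<theta> t B1 1" "\<theta> t W2 1 \<noteq> 0"
      using r by (auto simp: U_def P_def V_def Q_def)
    show ?thesis using der[OF t, of B2] unfolding region_theta(4)[of "\<theta> t", OF r'] U_def P_def V_def Q_def .
  qed
  have i1: "P 0 = b0" and i2: "Q 0 = b0" using init_b d1 by (auto simp: P_def Q_def)
  have i3: "\<bar>V 0\<bar> \<le> sqrt b0" using init_w22 by (simp add: V_def)
  have i4: "\<bar>V 0\<bar> * (\<bar>U 0\<bar> - b0) \<ge> b0" using init_w12 by (simp add: V_def U_def)
  note ode = ode_analysis[OF b0_pos cU cP cV cQ dU dP dV dQ i1 i2 i3 i4]
  have H1: "\<forall>t\<ge>0. (P t > 0 \<and> Q t > 0 \<and> \<bar>U t\<bar> > P t \<and> V t \<noteq> 0) \<and> \<bar>U t\<bar> - P t \<ge> sqrt b0"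
    by (rule ode(1))
  have H2: "((\<lambda>t. max (\<bar>V t\<bar> * (\<bar>U t\<bar> - P t) - Q t) 0) \<longlongrightarrow> 0) at_top"
    by (rule ode(2))
  have nf2: "norm_d d (f2 (\<theta> t) e2) = max (\<bar>V t\<bar> * (\<bar>U t\<bar> - P t) - Q t) 0" if "t \<ge> 0" for t
  proof -
    have "norm_d d (f2 (\<theta> t) e2) = \<bar>f2 (\<theta> t) e2 1\<bar>"
      by (rule norm_d_single[OF d1 f2_e2_other])
    also have "\<dots> = max (\<bar>V t\<bar> * (\<bar>U t\<bar> - P t) - Q t) 0"
      using region_theta(5)[of "\<theta> t"] H1 that unfolding U_def P_def V_def Q_def by auto
    finally show ?thesis .
  qed
  have nf1: "norm_d d (f1 (\<theta> t) e2) = \<bar>U t\<bar> - P t" if "t \<ge> 0" for t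
  proof -
    have "norm_d d (f1 (\<theta> t) e2) = \<bar>f1 (\<theta> t) e2 1\<bar>"
      by (rule norm_d_single[OF d1 f1_e2_other])
    also have "\<dots> = \<bar>U t\<bar> - P t"
      using region_theta(6)[of "\<theta> t"] H1 that unfolding U_def P_def V_def Q_def by auto
    finally show ?thesis .
  qed
  have ev: "eventually (\<lambda>t. t \<ge> (0::real)) at_top" by simp
  have C1: "((\<lambda>t. norm_d d (f2 (\<theta> t) e2)) \<longlongrightarrow> 0) at_top"
  proof -
    have evq: "eventually (\<lambda>t. norm_d d (f2 (\<theta> t) e2) = max (\<bar>V t\<bar> * (\<bar>U t\<bar> - P t) - Q t) 0) at_top"
      by (rule eventually_mono[OF ev]) (rule nf2)
    show ?thesis using tendsto_cong[OF evq] H2 by simp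
  qed
  have C2: "Liminf at_top (\<lambda>t. ereal (norm_d d (f1 (\<theta> t) e2))) \<ge> ereal (sqrt b0)"
    by (rule Liminf_bounded) (use ev in \<open>eventually_elim\<close>, use H1 nf1 in auto)
  show ?thesis using C1 C2 by simp
qed


end
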